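(* Let $(p(N))_{N\in\mathbb N}$ be any sequence in $(\frac12,1)$. Then $$\max_{1\le k\le N}\ \max_{\tau_k(W)\le n<\tau_{k+1}(W)}\big(\log_N k-\log_N W(n)\big)\to0\quad\text{in }\mathbb P_1^{p(N),+}\text{-probability as }N\to\infty.$$
   Context: Let $\mathbb W$ be the set of integer sequences $w=(w(0),w(1),\dots)$ with $w(n+1)-w(n)\in\{-1,1\}$. For $p\in(0,1)$ and $k\in\mathbb Z$, $\mathbb P_k^p$ is the law on $\mathbb W$ of the simple random walk $W$ with $W(0)=k$ stepping $+1$ with probability $p$ and $-1$ with probability $1-p$. $\tau_k(w):=\min\{n\in\mathbb N_0: w(n)=k\}$, $\tau_k^+(w):=\min\{n\in\mathbb N:w(n)=k\}$. For $p>1/2$ and $\ell\in\mathbb N_0$, $\mathbb P_\ell^{p,+}$ denotes $\mathbb P_\ell^p$ conditioned on $\{\tau_0^+(W)=\infty\}$. $\log_N x=\log x/\log N$. *)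

theory Defs
  imports "HOL-Probability.Probability"
begin

text \<open>Step sequences: i.i.d. Bernoulli(p) booleans (True = step +1, False = step -1).\<close>
definition step_space :: "real \<Rightarrow> bool stream measure" where
  "step_space p = stream_space (measure_pmf (bernoulli_pmf p))"

definition walk_of :: "int \<Rightarrow> bool stream \<Rightarrow> nat \<Rightarrow> int" where
  "walk_of k \<omega> n = k + (\<Sum>i<n. if snth \<omega> i then 1 else -1)"

definition walk_law :: "real \<Rightarrow> int \<Rightarrow> (nat \<Rightarrow> int) measure" where
  "walk_law p k = distr (step_space p) (PiM UNIV (\<lambda>_. count_space UNIV)) (walk_of k)"

definition tau :: "int \<Rightarrow> (nat \<Rightarrow> int) \<Rightarrow> enat" where
  "tau k w = (if \<exists>n. w n = k then enat (LEAST n. w n = k) else \<infinity>)"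

definition tau_plus :: "int \<Rightarrow> (nat \<Rightarrow> int) \<Rightarrow> enat" where
  "tau_plus k w = (if \<exists>n\<ge>1. w n = k then enat (LEAST n. n \<ge> 1 \<and> w n = k) else \<infinity>)"

text \<open>The conditioned law P_l^{p,+}: P_l^p conditioned on never returning to 0.\<close>
definition walk_law_plus_prob :: "real \<Rightarrow> int \<Rightarrow> (nat \<Rightarrow> int) set \<Rightarrow> real" where
  "walk_law_plus_prob p l A =
     measure (walk_law p l) (A \<inter> {w. tau_plus 0 w = \<infinity>}) / measure (walk_law p l) {w. tau_plus 0 w = \<infinity>}"

definition maxdev :: "nat \<Rightarrow> (nat \<Rightarrow> int) \<Rightarrow> real" where
  "maxdev N w = (SUP k\<in>{1..N}. SUP n\<in>{n. tau (int k) w \<le> enat n \<and> enat n < tau (int k + 1) w}.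
                  log (real N) (real k) - log (real N) (real_of_int (w n)))"

end

theory Submission imports Defs "HOL-Real_Asymp.Real_Asymp"
begin

lemma space_step_space[simp]: "space (step_space p) = UNIV"
  by (simp add: step_space_def space_stream_space)

lemma sets_step_space: "sets (step_space p) = sets (stream_space (count_space UNIV))"
  unfolding step_space_def by (rule sets_stream_space_cong) simp

lemma prob_space_step: "prob_space (step_space p)"
  unfolding step_space_def by (rule prob_space.prob_space_stream_space) (rule prob_space_measure_pmf)

lemma stake_sets: "{\<omega>. stake n \<omega> \<in> X} \<in> sets (step_space p)"
proof -
  have "stake n \<in> measurable (step_space p) (count_space (UNIV :: bool list set))"
    using measurable_stake[of n] by (subst measurable_cong_sets[OF sets_step_space refl])
  from measurable_sets[OF this, of X] show ?thesis by (simp add: vimage_def)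
qed

lemma stl_sets: "C \<in> sets (step_space p) \<Longrightarrow> {\<omega>. stl \<omega> \<in> C} \<in> sets (step_space p)"
proof -
  assume C: "C \<in> sets (step_space p)"
  have "stl \<in> measurable (step_space p) (step_space p)"
    unfolding step_space_def by (rule measurable_stl)
  from measurable_sets[OF this C] show ?thesis by (simp add: vimage_def)
qed

lemma sdrop_sets: "C \<in> sets (step_space p) \<Longrightarrow> {\<omega>. sdrop n \<omega> \<in> C} \<in> sets (step_space p)"
proof -
  assume C: "C \<in> sets (step_space p)"
  have "sdrop n \<in> measurable (step_space p) (step_space p)"
    unfolding step_space_def by (rule measurable_sdrop)
  from measurable_sets[OF this C] show ?thesis by (simp add: vimage_def)
qed

lemma one_step:
  assumes C: "C \<in> sets (step_space p)"
  shows "measure (step_space p) {\<omega>. shd \<omega> = b \<and> stl \<omega> \<in> C} = pmf (bernoulli_pmf p) b * measure (step_space p) C"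
proof -
  interpret S: prob_space "step_space p" by (rule prob_space_step)
  have X: "{\<omega>. shd \<omega> = b \<and> stl \<omega> \<in> C} = {\<omega>. stake 1 \<omega> \<in> {[b]}} \<inter> {\<omega>. stl \<omega> \<in> C}"
    by auto
  have Xs: "{\<omega>. shd \<omega> = b \<and> stl \<omega> \<in> C} \<in> sets (step_space p)"
    unfolding X by (intro sets.Int stake_sets stl_sets C)
  have "emeasure (step_space p) {\<omega>. shd \<omega> = b \<and> stl \<omega> \<in> C}
     = (\<integral>\<^sup>+t. emeasure (step_space p) {x\<in>space (step_space p). t ## x \<in> {\<omega>. shd \<omega> = b \<and> stl \<omega> \<in> C}} \<partial>measure_pmf (bernoulli_pmf p))"
    unfolding step_space_def by (rule prob_space.emeasure_stream_space[OF prob_space_measure_pmf]) (use Xs in \<open>simp add: step_space_def\<close>)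
  also have "\<dots> = (\<integral>\<^sup>+t. emeasure (step_space p) C * indicator {b} t \<partial>measure_pmf (bernoulli_pmf p))"
    by (intro nn_integral_cong) (auto split: split_indicator)
  also have "\<dots> = emeasure (step_space p) C * emeasure (measure_pmf (bernoulli_pmf p)) {b}"
    by (rule nn_integral_cmult_indicator) simp
  also have "\<dots> = ennreal (measure (step_space p) C * pmf (bernoulli_pmf p) b)"
    by (simp add: S.emeasure_eq_measure emeasure_pmf_single ennreal_mult)
  finally show ?thesis
    by (simp add: S.emeasure_eq_measure mult.commute)
qed

lemma two_step:
  assumes p: "0 \<le> p" "p \<le> 1" and A: "A \<in> sets (step_space p)" and B: "B \<in> sets (step_space p)"
  shows "measure (step_space p) {\<omega>. (shd \<omega> \<and> stl \<omega> \<in> A) \<or> (\<not> shd \<omega> \<and> stl \<omega> \<in> B)}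
       = p * measure (step_space p) A + (1 - p) * measure (step_space p) B"
proof -
  interpret S: prob_space "step_space p" by (rule prob_space_step)
  have X: "{\<omega>. (shd \<omega> \<and> stl \<omega> \<in> A) \<or> (\<not> shd \<omega> \<and> stl \<omega> \<in> B)}
     = {\<omega>. shd \<omega> = True \<and> stl \<omega> \<in> A} \<union> {\<omega>. shd \<omega> = False \<and> stl \<omega> \<in> B}" by blast
  have s1: "{\<omega>. shd \<omega> = b \<and> stl \<omega> \<in> D} \<in> sets (step_space p)" if "D \<in> sets (step_space p)" for b D
  proof -
    have e: "{\<omega>. shd \<omega> = b \<and> stl \<omega> \<in> D} = {\<omega>. stake 1 \<omega> \<in> {[b]}} \<inter> {\<omega>. stl \<omega> \<in> D}" by auto
    show ?thesis unfolding e by (rule sets.Int[OF stake_sets stl_sets[OF that]])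
  qed
  show ?thesis unfolding X
  proof (subst S.finite_measure_Union)
    show "{\<omega>. shd \<omega> = True \<and> stl \<omega> \<in> A} \<in> sets (step_space p)" by (rule s1[OF A])
    show "{\<omega>. shd \<omega> = False \<and> stl \<omega> \<in> B} \<in> sets (step_space p)" by (rule s1[OF B])
    show "{\<omega>. shd \<omega> = True \<and> stl \<omega> \<in> A} \<inter> {\<omega>. shd \<omega> = False \<and> stl \<omega> \<in> B} = {}" by auto
    show "measure (step_space p) {\<omega>. shd \<omega> = True \<and> stl \<omega> \<in> A} + measure (step_space p) {\<omega>. shd \<omega> = False \<and> stl \<omega> \<in> B} =
    p * measure (step_space p) A + (1 - p) * measure (step_space p) B"
      unfolding one_step[OF A] one_step[OF B] by (simp add: p)
  qed
qed

lemma prefix_indep: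
  assumes p: "0 \<le> p" "p \<le> 1" and C: "C \<in> sets (step_space p)"
  shows "measure (step_space p) {\<omega>. stake n \<omega> \<in> X \<and> sdrop n \<omega> \<in> C}
       = measure (step_space p) {\<omega>. stake n \<omega> \<in> X} * measure (step_space p) C"
proof (induction n arbitrary: X)
  case 0
  interpret S: prob_space "step_space p" by (rule prob_space_step)
  show ?case
  proof (cases "[] \<in> X")
    case True
    then have "{\<omega>. stake 0 \<omega> \<in> X} = space (step_space p)" by simp
    then show ?thesis using True S.prob_space by simp
  next
    case False
    then show ?thesis by simp
  qed
next
  case (Suc n)
  define XT where "XT = {xs. True # xs \<in> X}"
  define XF where "XF = {xs. False # xs \<in> X}"
  have e1: "{\<omega>. stake (Suc n) \<omega> \<in> X \<and> sdrop (Suc n) \<omega> \<in> C}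
     = {\<omega>. (shd \<omega> \<and> stl \<omega> \<in> {\<omega>. stake n \<omega> \<in> XT \<and> sdrop n \<omega> \<in> C})
          \<or> (\<not> shd \<omega> \<and> stl \<omega> \<in> {\<omega>. stake n \<omega> \<in> XF \<and> sdrop n \<omega> \<in> C})}"
  proof (intro set_eqI)
    fix \<omega> :: "bool stream"
    show "\<omega> \<in> {\<omega>. stake (Suc n) \<omega> \<in> X \<and> sdrop (Suc n) \<omega> \<in> C} \<longleftrightarrow> \<omega> \<in> {\<omega>. (shd \<omega> \<and> stl \<omega> \<in> {\<omega>. stake n \<omega> \<in> XT \<and> sdrop n \<omega> \<in> C})
          \<or> (\<not> shd \<omega> \<and> stl \<omega> \<in> {\<omega>. stake n \<omega> \<in> XF \<and> sdrop n \<omega> \<in> C})}"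
      by (cases "shd \<omega>") (simp_all add: XT_def XF_def)
  qed
  have e2: "{\<omega>. stake (Suc n) \<omega> \<in> X}
     = {\<omega>. (shd \<omega> \<and> stl \<omega> \<in> {\<omega>. stake n \<omega> \<in> XT}) \<or> (\<not> shd \<omega> \<and> stl \<omega> \<in> {\<omega>. stake n \<omega> \<in> XF})}"
  proof (intro set_eqI)
    fix \<omega> :: "bool stream"
    show "\<omega> \<in> {\<omega>. stake (Suc n) \<omega> \<in> X} \<longleftrightarrow> \<omega> \<in> {\<omega>. (shd \<omega> \<and> stl \<omega> \<in> {\<omega>. stake n \<omega> \<in> XT}) \<or> (\<not> shd \<omega> \<and> stl \<omega> \<in> {\<omega>. stake n \<omega> \<in> XF})}"
      by (cases "shd \<omega>") (simp_all add: XT_def XF_def)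
  qed
  have m: "{\<omega>. stake n \<omega> \<in> Y \<and> sdrop n \<omega> \<in> C} \<in> sets (step_space p)" for Y
  proof -
    have "{\<omega>. stake n \<omega> \<in> Y \<and> sdrop n \<omega> \<in> C} = {\<omega>. stake n \<omega> \<in> Y} \<inter> {\<omega>. sdrop n \<omega> \<in> C}" by auto
    then show ?thesis by (metis sets.Int stake_sets sdrop_sets C)
  qed
  show ?case
    unfolding e1 e2 two_step[OF p m m] two_step[OF p stake_sets stake_sets] Suc.IH
    by (simp add: algebra_simps)
qed

lemma walk_of_0[simp]: "walk_of x \<omega> 0 = x"
  by (simp add: walk_of_def)

lemma walk_step: "walk_of x \<omega> (Suc n) = walk_of x \<omega> n + (if \<omega> !! n then 1 else -1)"
  by (simp add: walk_of_def)

lemma walk_of_Suc: "walk_of x \<omega> (Suc n) = walk_of (x + (if shd \<omega> then 1 else -1)) (stl \<omega>) n"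
  by (simp only: walk_of_def sum.lessThan_Suc_shift snth.simps)

lemma walk_of_add: "walk_of x \<omega> (a + b) = walk_of (walk_of x \<omega> a) (sdrop a \<omega>) b"
  by (induction b) (simp_all add: walk_step sdrop_snth add.commute)

lemma walk_of_shift: "walk_of x \<omega> n = x + walk_of 0 \<omega> n"
  by (simp add: walk_of_def)

lemma walk_diff: "\<bar>walk_of x \<omega> (Suc n) - walk_of x \<omega> n\<bar> \<le> 1"
  by (simp add: walk_step)

lemma walk_stake:
  assumes "stake n \<omega> = stake n \<omega>'" "i \<le> n"
  shows "walk_of x \<omega> i = walk_of x \<omega>' i"
proof -
  have "\<omega> !! l = \<omega>' !! l" if "l < i" for l
    using assms that by (metis order_less_le_trans stake_nth)
  then show ?thesis unfolding walk_of_def by (intro arg_cong[where f="(+) x"] sum.cong) auto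
qed

lemma ivt_up:
  fixes f :: "nat \<Rightarrow> int"
  assumes d: "\<And>i. \<bar>f (Suc i) - f i\<bar> \<le> 1" and "f 0 \<le> c" "c \<le> f n"
  shows "\<exists>i\<le>n. f i = c"
  using assms(3)
proof (induction n)
  case 0
  then show ?case using assms(2) by auto
next
  case (Suc n)
  show ?case
  proof (cases "c \<le> f n")
    case True
    then show ?thesis using Suc.IH by (meson le_Suc_eq)
  next
    case False
    then have "f (Suc n) = c" using d[of n] Suc.prems by auto
    then show ?thesis by blast
  qed
qed

lemma ivt_down:
  fixes f :: "nat \<Rightarrow> int"
  assumes d: "\<And>i. \<bar>f (Suc i) - f i\<bar> \<le> 1" and "c \<le> f 0" "f n \<le> c"
  shows "\<exists>i\<le>n. f i = c"
proof -
  have "\<exists>i\<le>n. - f i = - c"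
    by (rule ivt_up[of "\<lambda>i. - f i"]) (use d assms in \<open>auto simp: abs_minus_commute\<close>)
  then show ?thesis by auto
qed

lemma first_hit:
  fixes f :: "nat \<Rightarrow> 'a"
  assumes "f n = c"
  shows "\<exists>i\<le>n. f i = c \<and> (\<forall>j<i. f j \<noteq> c)"
proof -
  let ?i = "LEAST i. f i = c"
  have "f ?i = c" by (rule LeastI[of _ n]) (use assms in auto)
  moreover have "?i \<le> n" by (rule Least_le) (use assms in auto)
  moreover have "\<forall>j<?i. f j \<noteq> c" using not_less_Least by blast
  ultimately show ?thesis by blast
qed

lemma sm_eq:
  assumes p: "0 \<le> p" "p \<le> 1"
    and det: "\<And>n \<omega> \<omega>'. stake n \<omega> = stake n \<omega>' \<Longrightarrow> P n \<omega> = P n \<omega>'"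
    and uniq: "\<And>\<omega> n m. P n \<omega> \<Longrightarrow> P m \<omega> \<Longrightarrow> n = m"
    and C: "C \<in> sets (step_space p)"
  shows "measure (step_space p) {\<omega>. \<exists>n. P n \<omega> \<and> sdrop n \<omega> \<in> C}
       = measure (step_space p) {\<omega>. \<exists>n. P n \<omega>} * measure (step_space p) C"
proof -
  interpret S: prob_space "step_space p" by (rule prob_space_step)
  define X where "X n = stake n ` {\<omega>. P n \<omega>}" for n
  have PX: "{\<omega>. P n \<omega>} = {\<omega>. stake n \<omega> \<in> X n}" for n
    unfolding X_def using det by blast
  define A where "A n = {\<omega>. P n \<omega> \<and> sdrop n \<omega> \<in> C}" for n
  define B where "B n = {\<omega>. P n \<omega>}" for n
  have A': "A n = {\<omega>. stake n \<omega> \<in> X n \<and> sdrop n \<omega> \<in> C}" for n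
    unfolding A_def using PX by blast
  have As: "A n \<in> sets (step_space p)" for n
  proof -
    have "A n = {\<omega>. stake n \<omega> \<in> X n} \<inter> {\<omega>. sdrop n \<omega> \<in> C}" unfolding A' by auto
    then show ?thesis by (metis sets.Int stake_sets sdrop_sets C)
  qed
  have Bs: "B n \<in> sets (step_space p)" for n
    unfolding B_def PX by (rule stake_sets)
  have dA: "disjoint_family A" unfolding disjoint_family_on_def A_def using uniq by blast
  have dB: "disjoint_family B" unfolding disjoint_family_on_def B_def using uniq by blast
  have s1: "(\<lambda>n. measure (step_space p) (A n)) sums measure (step_space p) (\<Union>n. A n)"
    by (rule measure_UNION) (use As dA S.emeasure_finite in auto)
  have s2: "(\<lambda>n. measure (step_space p) (B n)) sums measure (step_space p) (\<Union>n. B n)"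
    by (rule measure_UNION) (use Bs dB S.emeasure_finite in auto)
  have eqA: "measure (step_space p) (A n) = measure (step_space p) (B n) * measure (step_space p) C" for n
    unfolding A' B_def PX by (rule prefix_indep[OF p C])
  have s3: "(\<lambda>n. measure (step_space p) (A n)) sums (measure (step_space p) (\<Union>n. B n) * measure (step_space p) C)"
    unfolding eqA by (rule sums_mult2[OF s2])
  have "measure (step_space p) (\<Union>n. A n) = measure (step_space p) (\<Union>n. B n) * measure (step_space p) C"
    using sums_unique2[OF s1 s3] .
  moreover have "(\<Union>n. A n) = {\<omega>. \<exists>n. P n \<omega> \<and> sdrop n \<omega> \<in> C}" unfolding A_def by auto
  moreover have "(\<Union>n. B n) = {\<omega>. \<exists>n. P n \<omega>}" unfolding B_def by auto
  ultimately show ?thesis by simp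
qed


lemma det_sets:
  assumes "\<And>\<omega> \<omega>'. stake n \<omega> = stake n \<omega>' \<Longrightarrow> \<omega> \<in> E \<Longrightarrow> \<omega>' \<in> E"
  shows "E \<in> sets (step_space p)"
proof -
  have e: "E = {\<omega>. stake n \<omega> \<in> stake n ` E}"
  proof (intro set_eqI iffI)
    fix \<omega> assume "\<omega> \<in> {\<omega>. stake n \<omega> \<in> stake n ` E}"
    then obtain \<omega>' where "\<omega>' \<in> E" "stake n \<omega> = stake n \<omega>'" by auto
    then show "\<omega> \<in> E" using assms[of \<omega>' \<omega>] by simp
  qed auto
  show ?thesis by (subst e) (rule stake_sets)
qed

definition Gn :: "nat \<Rightarrow> int \<Rightarrow> int \<Rightarrow> int \<Rightarrow> bool stream set" where
  "Gn n x a b = {\<omega>. \<exists>i\<le>n. walk_of x \<omega> i = a \<and> (\<forall>l\<le>i. walk_of x \<omega> l \<noteq> b)}"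

definition Gall :: "int \<Rightarrow> int \<Rightarrow> int \<Rightarrow> bool stream set" where
  "Gall x a b = {\<omega>. \<exists>i. walk_of x \<omega> i = a \<and> (\<forall>l\<le>i. walk_of x \<omega> l \<noteq> b)}"

lemma Gn_sets: "Gn n x a b \<in> sets (step_space p)"
proof (rule det_sets[of n])
  fix \<omega> \<omega>' assume st: "stake n \<omega> = stake n \<omega>'" and "\<omega> \<in> Gn n x a b"
  then obtain i where i: "i \<le> n" "walk_of x \<omega> i = a" "\<forall>l\<le>i. walk_of x \<omega> l \<noteq> b"
    unfolding Gn_def by blast
  have "walk_of x \<omega>' l = walk_of x \<omega> l" if "l \<le> i" for l
    using walk_stake[OF st, of l x] that i(1) by simp
  then show "\<omega>' \<in> Gn n x a b" unfolding Gn_def using i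
    by (intro CollectI exI[of _ i] conjI allI impI) auto
qed

lemma Gall_Union: "Gall x a b = (\<Union>n. Gn n x a b)"
  unfolding Gall_def Gn_def by blast

lemma Gall_sets: "Gall x a b \<in> sets (step_space p)"
  unfolding Gall_Union by (rule sets.countable_nat_UN) (use Gn_sets in auto)

lemma Gn_b: "Gn n b a b = {}"
  unfolding Gn_def by auto

lemma Gn_0: "x \<noteq> a \<Longrightarrow> Gn 0 x a b = {}"
  unfolding Gn_def by auto

lemma Gn_Suc:
  assumes "x \<noteq> a" "x \<noteq> b"
  shows "\<omega> \<in> Gn (Suc n) x a b \<longleftrightarrow> stl \<omega> \<in> Gn n (x + (if shd \<omega> then 1 else -1)) a b"
proof
  assume "\<omega> \<in> Gn (Suc n) x a b"
  then obtain i where i: "i \<le> Suc n" "walk_of x \<omega> i = a" "\<forall>l\<le>i. walk_of x \<omega> l \<noteq> b"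
    unfolding Gn_def by blast
  from i assms obtain i' where i': "i = Suc i'" by (cases i) auto
  show "stl \<omega> \<in> Gn n (x + (if shd \<omega> then 1 else -1)) a b"
    unfolding Gn_def
  proof (intro CollectI exI conjI allI impI)
    show "i' \<le> n" using i i' by simp
    show "walk_of (x + (if shd \<omega> then 1 else -1)) (stl \<omega>) i' = a"
      using i(2) by (simp only: i' walk_of_Suc)
    fix l assume "l \<le> i'"
    then show "walk_of (x + (if shd \<omega> then 1 else -1)) (stl \<omega>) l \<noteq> b"
      using i(3)[rule_format, of "Suc l"] by (simp add: i' walk_of_Suc)
  qed
next
  assume "stl \<omega> \<in> Gn n (x + (if shd \<omega> then 1 else -1)) a b"
  then obtain i where i: "i \<le> n" "walk_of (x + (if shd \<omega> then 1 else -1)) (stl \<omega>) i = a"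
      "\<forall>l\<le>i. walk_of (x + (if shd \<omega> then 1 else -1)) (stl \<omega>) l \<noteq> b"
    unfolding Gn_def by blast
  show "\<omega> \<in> Gn (Suc n) x a b"
    unfolding Gn_def
  proof (intro CollectI exI conjI allI impI)
    show "Suc i \<le> Suc n" using i by simp
    show "walk_of x \<omega> (Suc i) = a" using i(2) by (simp only: walk_of_Suc)
    fix l assume l: "l \<le> Suc i"
    show "walk_of x \<omega> l \<noteq> b"
    proof (cases l)
      case 0 then show ?thesis using assms by simp
    next
      case (Suc l') then show ?thesis using i(3)[rule_format, of l'] l by (simp add: walk_of_Suc)
    qed
  qed
qed

lemma Gn_Suc_set:
  assumes "x \<noteq> a" "x \<noteq> b"
  shows "Gn (Suc n) x a b = {\<omega>. (shd \<omega> \<and> stl \<omega> \<in> Gn n (x + 1) a b) \<or> (\<not> shd \<omega> \<and> stl \<omega> \<in> Gn n (x - 1) a b)}"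
proof (intro set_eqI)
  fix \<omega> :: "bool stream"
  show "\<omega> \<in> Gn (Suc n) x a b \<longleftrightarrow> \<omega> \<in> {\<omega>. (shd \<omega> \<and> stl \<omega> \<in> Gn n (x + 1) a b) \<or> (\<not> shd \<omega> \<and> stl \<omega> \<in> Gn n (x - 1) a b)}"
    unfolding Gn_Suc[OF assms] by (cases "shd \<omega>") simp_all
qed

lemma gambler_n:
  fixes \<phi> :: "int \<Rightarrow> real"
  assumes p: "0 \<le> p" "p \<le> 1" and ab: "a \<noteq> b"
    and harm: "\<And>y. min a b < y \<Longrightarrow> y < max a b \<Longrightarrow> p * \<phi> (y + 1) + (1 - p) * \<phi> (y - 1) = \<phi> y"
    and nonneg: "\<And>y. min a b \<le> y \<Longrightarrow> y \<le> max a b \<Longrightarrow> 0 \<le> \<phi> y"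
    and pa: "1 \<le> \<phi> a"
  shows "min a b \<le> x \<Longrightarrow> x \<le> max a b \<Longrightarrow> measure (step_space p) (Gn n x a b) \<le> \<phi> x"
proof (induction n arbitrary: x)
  interpret S: prob_space "step_space p" by (rule prob_space_step)
  case 0
  show ?case
  proof (cases "x = a")
    case True
    have "measure (step_space p) (Gn 0 x a b) \<le> 1" by (rule S.prob_le_1)
    then show ?thesis by (rule order_trans) (simp add: True pa)
  next
    case False then show ?thesis using Gn_0[OF False] nonneg 0 by simp
  qed
next
  interpret S: prob_space "step_space p" by (rule prob_space_step)
  case (Suc n)
  show ?case
  proof (cases "x = a")
    case True
    have "measure (step_space p) (Gn (Suc n) x a b) \<le> 1" by (rule S.prob_le_1)
    then show ?thesis by (rule order_trans) (simp add: True pa)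
  next
    case xa: False
    show ?thesis
    proof (cases "x = b")
      case True then show ?thesis using Gn_b nonneg Suc.prems by simp
    next
      case xb: False
      have in1: "min a b < x" "x < max a b" using Suc.prems xa xb by auto
      have "measure (step_space p) (Gn (Suc n) x a b)
          = p * measure (step_space p) (Gn n (x + 1) a b) + (1 - p) * measure (step_space p) (Gn n (x - 1) a b)"
        unfolding Gn_Suc_set[OF xa xb] by (rule two_step[OF p Gn_sets Gn_sets])
      also have "\<dots> \<le> p * \<phi> (x + 1) + (1 - p) * \<phi> (x - 1)"
        using Suc.IH[of "x+1"] Suc.IH[of "x - 1"] in1 p
        by (intro add_mono mult_left_mono) auto
      also have "\<dots> = \<phi> x" using harm in1 by simp
      finally show ?thesis .
    qed
  qed
qed

lemma gambler_all:
  fixes \<phi> :: "int \<Rightarrow> real"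
  assumes p: "0 \<le> p" "p \<le> 1" and ab: "a \<noteq> b"
    and harm: "\<And>y. min a b < y \<Longrightarrow> y < max a b \<Longrightarrow> p * \<phi> (y + 1) + (1 - p) * \<phi> (y - 1) = \<phi> y"
    and nonneg: "\<And>y. min a b \<le> y \<Longrightarrow> y \<le> max a b \<Longrightarrow> 0 \<le> \<phi> y"
    and pa: "1 \<le> \<phi> a"
    and x: "min a b \<le> x" "x \<le> max a b"
  shows "measure (step_space p) (Gall x a b) \<le> \<phi> x"
proof -
  interpret S: prob_space "step_space p" by (rule prob_space_step)
  have inc: "incseq (\<lambda>n. Gn n x a b)"
    by (rule incseq_SucI) (auto simp: Gn_def intro: le_SucI)
  have "(\<lambda>n. measure (step_space p) (Gn n x a b)) \<longlonglongrightarrow> measure (step_space p) (\<Union>n. Gn n x a b)"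
    by (rule S.finite_Lim_measure_incseq) (use inc Gn_sets in auto)
  then show ?thesis unfolding Gall_Union
    by (rule LIMSEQ_le_const2) (use gambler_n[OF p ab harm nonneg pa x] in auto)
qed

lemma harm_aux:
  fixes D :: real
  assumes "D \<noteq> 0" "p * A1 + (1 - p) * A2 = Y"
  shows "p * ((A1 - B) / D) + (1 - p) * ((A2 - B) / D) = (Y - B) / D"
proof -
  have "p * ((A1 - B) / D) + (1 - p) * ((A2 - B) / D) = (p * A1 + (1 - p) * A2 - B) / D"
    using assms(1) by (simp add: field_simps)
  then show ?thesis using assms(2) by simp
qed

lemma gambler:
  assumes p: "1/2 < p" "p < 1" and ab: "a \<noteq> b"
    and x: "min a b \<le> x" "x \<le> max a b"
  defines "r \<equiv> (1 - p) / p"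
  shows "measure (step_space p) (Gall x a b) \<le> (r powi x - r powi b) / (r powi a - r powi b)"
proof (rule gambler_all[OF _ _ ab _ _ _ x])
  have r0: "0 < r" "r < 1" using p unfolding r_def by (auto simp: field_simps)
  have ne: "r powi a \<noteq> r powi b"
  proof
    assume "r powi a = r powi b"
    then show False using ab r0 power_int_strict_decreasing[of a b r] power_int_strict_decreasing[of b a r]
      by (cases "a < b") auto
  qed
  show "0 \<le> p" "p \<le> 1" using p by auto
  show "1 \<le> (r powi a - r powi b) / (r powi a - r powi b)" using ne by simp
  fix y
  show "p * ((r powi (y + 1) - r powi b) / (r powi a - r powi b)) +
        (1 - p) * ((r powi (y - 1) - r powi b) / (r powi a - r powi b)) =
        (r powi y - r powi b) / (r powi a - r powi b)"
  proof -
    define Z where "Z = r powi (y - 1)"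
    have e2: "r powi y = Z * r" unfolding Z_def using r0 power_int_add_1[of r "y - 1"] by simp
    have e1: "r powi (y + 1) = Z * r * r" using r0 e2 by (simp add: power_int_add_1)
    have pp: "p > 0" using p by simp
    have key0: "p * (Z * ((1-p)/p) * ((1-p)/p)) + (1 - p) * Z = Z * ((1-p)/p)"
      using pp by (simp add: field_simps power2_eq_square)
    have key: "p * r powi (y + 1) + (1 - p) * r powi (y - 1) = r powi y"
      unfolding e1 e2 Z_def[symmetric] using key0 unfolding r_def .
    have D: "r powi a - r powi b \<noteq> 0" using ne by simp
    show ?thesis by (rule harm_aux[OF D key])
  qed
next
  fix y assume y: "min a b \<le> y" "y \<le> max a b"
  have r0: "0 < r" "r < 1" using p unfolding r_def by (auto simp: field_simps)
  show "0 \<le> (r powi y - r powi b) / (r powi a - r powi b)"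
  proof (cases "a < b")
    case True
    then have "r powi b \<le> r powi y" "r powi b < r powi a"
      using y r0 by (auto intro!: power_int_decreasing power_int_strict_decreasing)
    then show ?thesis by simp
  next
    case False
    then have "r powi y \<le> r powi b" "r powi a < r powi b"
      using y r0 ab by (auto intro!: power_int_decreasing power_int_strict_decreasing)
    then show ?thesis by (simp add: divide_nonpos_neg)
  qed
qed


lemma sm_sets:
  assumes det: "\<And>n \<omega> \<omega>'. stake n \<omega> = stake n \<omega>' \<Longrightarrow> P n \<omega> = P n \<omega>'"
    and C: "C \<in> sets (step_space p)"
  shows "{\<omega>. \<exists>n. P n \<omega> \<and> sdrop n \<omega> \<in> C} \<in> sets (step_space p)"
proof -
  have A: "{\<omega>. P n \<omega> \<and> sdrop n \<omega> \<in> C} \<in> sets (step_space p)" for n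
  proof -
    have Ps: "{\<omega>. P n \<omega>} \<in> sets (step_space p)"
    proof (rule det_sets[of n])
      fix \<omega> \<omega>' :: "bool stream"
      assume st: "stake n \<omega> = stake n \<omega>'" and "\<omega> \<in> {\<omega>. P n \<omega>}"
      then show "\<omega>' \<in> {\<omega>. P n \<omega>}" using det[OF st] by simp
    qed
    have "{\<omega>. P n \<omega> \<and> sdrop n \<omega> \<in> C} = {\<omega>. P n \<omega>} \<inter> {\<omega>. sdrop n \<omega> \<in> C}" by auto
    then show ?thesis using sets.Int[OF Ps sdrop_sets[OF C]] by simp
  qed
  have "{\<omega>. \<exists>n. P n \<omega> \<and> sdrop n \<omega> \<in> C} = (\<Union>n. {\<omega>. P n \<omega> \<and> sdrop n \<omega> \<in> C})" by auto
  then show ?thesis using sets.countable_nat_UN[of "\<lambda>n. {\<omega>. P n \<omega> \<and> sdrop n \<omega> \<in> C}"] A by auto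
qed

definition FHB :: "int \<Rightarrow> int \<Rightarrow> int set \<Rightarrow> nat \<Rightarrow> bool stream \<Rightarrow> bool" where
  "FHB x c B n \<omega> = (walk_of x \<omega> n = c \<and> (\<forall>i<n. walk_of x \<omega> i \<noteq> c) \<and> (\<forall>i\<le>n. walk_of x \<omega> i \<notin> B))"

lemma FHB_det: "stake n \<omega> = stake n \<omega>' \<Longrightarrow> FHB x c B n \<omega> = FHB x c B n \<omega>'"
proof -
  assume st: "stake n \<omega> = stake n \<omega>'"
  have "walk_of x \<omega> i = walk_of x \<omega>' i" if "i \<le> n" for i using walk_stake[OF st that] .
  then show ?thesis unfolding FHB_def by auto
qed

lemma FHB_uniq:
  assumes "FHB x c B n \<omega>" "FHB x c B m \<omega>" shows "n = m"
proof (rule ccontr)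
  assume "n \<noteq> m"
  then have "n < m \<or> m < n" by arith
  then show False using assms unfolding FHB_def by auto
qed

lemma FHB_Gall: "{\<omega>. \<exists>n. FHB x c {b} n \<omega>} = Gall x c b"
proof (intro set_eqI iffI)
  fix \<omega> assume "\<omega> \<in> {\<omega>. \<exists>n. FHB x c {b} n \<omega>}"
  then show "\<omega> \<in> Gall x c b" unfolding FHB_def Gall_def by auto
next
  fix \<omega> assume "\<omega> \<in> Gall x c b"
  then obtain i where i: "walk_of x \<omega> i = c" "\<forall>l\<le>i. walk_of x \<omega> l \<noteq> b" unfolding Gall_def by auto
  obtain j where j: "j \<le> i" "walk_of x \<omega> j = c" "\<forall>l<j. walk_of x \<omega> l \<noteq> c"
    using first_hit[of "walk_of x \<omega>" i c] i(1) by auto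
  have "FHB x c {b} j \<omega>" unfolding FHB_def using i j by auto
  then show "\<omega> \<in> {\<omega>. \<exists>n. FHB x c {b} n \<omega>}" by auto
qed

lemma FHB_sm:
  assumes p: "0 \<le> p" "p \<le> 1" and C: "C \<in> sets (step_space p)"
  shows "measure (step_space p) {\<omega>. \<exists>n. FHB x c B n \<omega> \<and> sdrop n \<omega> \<in> C}
       = measure (step_space p) {\<omega>. \<exists>n. FHB x c B n \<omega>} * measure (step_space p) C"
  by (rule sm_eq[OF p FHB_det FHB_uniq C])

lemma FHB_sm_sets:
  assumes C: "C \<in> sets (step_space p)"
  shows "{\<omega>. \<exists>n. FHB x c B n \<omega> \<and> sdrop n \<omega> \<in> C} \<in> sets (step_space p)"
  by (rule sm_sets[OF FHB_det C])

definition H :: "int \<Rightarrow> bool stream set" where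
  "H x = {\<omega>. \<forall>n. walk_of x \<omega> n \<noteq> 0}"

lemma H_sets: "H x \<in> sets (step_space p)"
proof -
  have s: "{\<omega>. walk_of x \<omega> n \<noteq> 0} \<in> sets (step_space p)" for n
  proof (rule det_sets[of n])
    fix \<omega> \<omega>' :: "bool stream"
    assume st: "stake n \<omega> = stake n \<omega>'" and "\<omega> \<in> {\<omega>. walk_of x \<omega> n \<noteq> 0}"
    then show "\<omega>' \<in> {\<omega>. walk_of x \<omega> n \<noteq> 0}" using walk_stake[OF st order_refl, of x] by simp
  qed
  have "H x = (\<Inter>n. {\<omega>. walk_of x \<omega> n \<noteq> 0})" unfolding H_def by auto
  then show ?thesis using sets.countable_INT[where X=UNIV and A="\<lambda>n. {\<omega>. walk_of x \<omega> n \<noteq> 0}"] s by auto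
qed

lemma H_step:
  assumes p: "0 \<le> p" "p \<le> 1"
  shows "measure (step_space p) (H (x + 1)) \<le> measure (step_space p) (H 1) + measure (step_space p) (H x)"
proof -
  interpret S: prob_space "step_space p" by (rule prob_space_step)
  let ?E = "{\<omega>. \<exists>n. FHB (x + 1) x {} n \<omega> \<and> sdrop n \<omega> \<in> H x}"
  have sub: "H (x + 1) \<subseteq> H 1 \<union> ?E"
  proof
    fix \<omega> assume w: "\<omega> \<in> H (x + 1)"
    show "\<omega> \<in> H 1 \<union> ?E"
    proof (cases "\<exists>n. walk_of (x + 1) \<omega> n = x")
      case False
      have "walk_of 1 \<omega> n \<noteq> 0" for n
      proof -
        have "walk_of (x + 1) \<omega> n \<noteq> x" using False by auto
        then show ?thesis using walk_of_shift[of "x + 1" \<omega> n] walk_of_shift[of 1 \<omega> n] by linarith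
      qed
      then show ?thesis unfolding H_def by auto
    next
      case True
      then obtain n0 where "walk_of (x + 1) \<omega> n0 = x" by auto
      then obtain a where a: "walk_of (x + 1) \<omega> a = x" "\<forall>j<a. walk_of (x + 1) \<omega> j \<noteq> x"
        using first_hit[of "walk_of (x + 1) \<omega>" n0 x] by auto
      have "sdrop a \<omega> \<in> H x"
        unfolding H_def
      proof (intro CollectI allI)
        fix n
        have "walk_of x (sdrop a \<omega>) n = walk_of (x + 1) \<omega> (a + n)"
          using walk_of_add[of "x + 1" \<omega> a n] a(1) by simp
        then show "walk_of x (sdrop a \<omega>) n \<noteq> 0" using w unfolding H_def by simp
      qed
      then have "\<omega> \<in> ?E" using a unfolding FHB_def by auto
      then show ?thesis by simp
    qed
  qed
  have Es: "?E \<in> sets (step_space p)" by (rule FHB_sm_sets[OF H_sets])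
  have "measure (step_space p) (H (x + 1)) \<le> measure (step_space p) (H 1 \<union> ?E)"
    by (rule S.finite_measure_mono[OF sub]) (intro sets.Un H_sets Es)
  also have "\<dots> \<le> measure (step_space p) (H 1) + measure (step_space p) ?E"
    by (rule measure_subadditive) (use H_sets Es S.emeasure_finite in auto)
  also have "measure (step_space p) ?E = measure (step_space p) {\<omega>. \<exists>n. FHB (x + 1) x {} n \<omega>} * measure (step_space p) (H x)"
    by (rule FHB_sm[OF p H_sets])
  also have "\<dots> \<le> 1 * measure (step_space p) (H x)"
    by (intro mult_right_mono) auto
  finally show ?thesis by simp
qed

lemma H_le: 
  assumes p: "0 \<le> p" "p \<le> 1"
  shows "measure (step_space p) (H (int J)) \<le> real J * measure (step_space p) (H 1)"
proof (induction J)
  case 0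
  have "H 0 = {}" unfolding H_def using walk_of_0 by blast
  then show ?case by simp
next
  case (Suc J)
  have "measure (step_space p) (H (int J + 1)) \<le> measure (step_space p) (H 1) + measure (step_space p) (H (int J))"
    by (rule H_step[OF p])
  then show ?case using Suc.IH by (simp add: algebra_simps)
qed


lemma allT_sets: "{\<omega>. \<forall>i<L. \<omega> !! i} \<in> sets (step_space p)"
proof (rule det_sets[of L])
  fix \<omega> \<omega>' :: "bool stream"
  assume st: "stake L \<omega> = stake L \<omega>'" and "\<omega> \<in> {\<omega>. \<forall>i<L. \<omega> !! i}"
  have "\<omega>' !! i = \<omega> !! i" if "i < L" for i
    using stake_nth[OF that, of \<omega>] stake_nth[OF that, of \<omega>'] st by simp
  then show "\<omega>' \<in> {\<omega>. \<forall>i<L. \<omega> !! i}" using \<open>\<omega> \<in> {\<omega>. \<forall>i<L. \<omega> !! i}\<close> by simp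
qed

lemma allT_prob:
  assumes p: "0 \<le> p" "p \<le> 1"
  shows "measure (step_space p) {\<omega>. \<forall>i<L. \<omega> !! i} = p ^ L"
proof (induction L)
  interpret S: prob_space "step_space p" by (rule prob_space_step)
  case 0
  have "{\<omega>. \<forall>i<(0::nat). \<omega> !! i} = space (step_space p)" by simp
  then show ?case using S.prob_space by simp
next
  case (Suc L)
  have e: "{\<omega>. \<forall>i<Suc L. \<omega> !! i} = {\<omega>. shd \<omega> = True \<and> stl \<omega> \<in> {\<omega>. \<forall>i<L. \<omega> !! i}}"
  proof (intro set_eqI iffI)
    fix \<omega> :: "bool stream"
    assume "\<omega> \<in> {\<omega>. \<forall>i<Suc L. \<omega> !! i}"
    then have h: "\<And>i. i < Suc L \<Longrightarrow> \<omega> !! i" by simp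
    have "shd \<omega>" using h[of 0] by simp
    moreover have "stl \<omega> !! i" if "i < L" for i using h[of "Suc i"] that by simp
    ultimately show "\<omega> \<in> {\<omega>. shd \<omega> = True \<and> stl \<omega> \<in> {\<omega>. \<forall>i<L. \<omega> !! i}}" by simp
  next
    fix \<omega> :: "bool stream"
    assume a: "\<omega> \<in> {\<omega>. shd \<omega> = True \<and> stl \<omega> \<in> {\<omega>. \<forall>i<L. \<omega> !! i}}"
    show "\<omega> \<in> {\<omega>. \<forall>i<Suc L. \<omega> !! i}"
    proof (intro CollectI allI impI)
      fix i assume "i < Suc L"
      then show "\<omega> !! i" using a by (cases i) auto
    qed
  qed
  show ?case unfolding e one_step[OF allT_sets] Suc.IH using p by simp
qed

lemma walk_allT: "(\<forall>i<L. \<omega> !! i) \<Longrightarrow> walk_of y \<omega> L = y + int L"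
  unfolding walk_of_def by simp

definition Fz :: "int \<Rightarrow> int \<Rightarrow> int \<Rightarrow> nat \<Rightarrow> bool stream set" where
  "Fz x lo hi n = {\<omega>. \<forall>i\<le>n. lo < walk_of x \<omega> i \<and> walk_of x \<omega> i < hi}"

lemma Fz_det: "stake n \<omega> = stake n \<omega>' \<Longrightarrow> \<omega> \<in> Fz x lo hi n \<Longrightarrow> \<omega>' \<in> Fz x lo hi n"
proof -
  assume st: "stake n \<omega> = stake n \<omega>'" and w: "\<omega> \<in> Fz x lo hi n"
  have "walk_of x \<omega> i = walk_of x \<omega>' i" if "i \<le> n" for i using walk_stake[OF st that] .
  then show ?thesis using w unfolding Fz_def by auto
qed

lemma Fz_sets: "Fz x lo hi n \<in> sets (step_space p)"
  by (rule det_sets[of n]) (rule Fz_det)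

lemma Fz_step:
  assumes p: "0 \<le> p" "p \<le> 1" and L: "lo + int L \<ge> hi"
  shows "measure (step_space p) (Fz x lo hi (n * L + L)) \<le> measure (step_space p) (Fz x lo hi (n * L)) * (1 - p ^ L)"
proof -
  interpret S: prob_space "step_space p" by (rule prob_space_step)
  define X where "X = stake (n * L) ` Fz x lo hi (n * L)"
  define C where "C = space (step_space p) - {\<omega>. \<forall>i<L. \<omega> !! i}"
  have Cs: "C \<in> sets (step_space p)" unfolding C_def by (intro sets.compl_sets allT_sets)
  have FX: "Fz x lo hi (n * L) = {\<omega>. stake (n * L) \<omega> \<in> X}"
  proof (intro set_eqI iffI)
    fix \<omega> assume "\<omega> \<in> Fz x lo hi (n * L)"
    then show "\<omega> \<in> {\<omega>. stake (n * L) \<omega> \<in> X}" unfolding X_def by simp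
  next
    fix \<omega> assume "\<omega> \<in> {\<omega>. stake (n * L) \<omega> \<in> X}"
    then obtain \<omega>' where "\<omega>' \<in> Fz x lo hi (n * L)" "stake (n * L) \<omega>' = stake (n * L) \<omega>"
      unfolding X_def by auto
    then show "\<omega> \<in> Fz x lo hi (n * L)" using Fz_det by blast
  qed
  have sub: "Fz x lo hi (n * L + L) \<subseteq> {\<omega>. stake (n * L) \<omega> \<in> X \<and> sdrop (n * L) \<omega> \<in> C}"
  proof
    fix \<omega> assume w: "\<omega> \<in> Fz x lo hi (n * L + L)"
    then have w1: "\<omega> \<in> Fz x lo hi (n * L)" unfolding Fz_def by auto
    have "sdrop (n * L) \<omega> \<in> C"
    proof (rule ccontr)
      assume "sdrop (n * L) \<omega> \<notin> C"
      then have allt: "\<forall>i<L. sdrop (n * L) \<omega> !! i" unfolding C_def by simp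
      have "walk_of x \<omega> (n * L + L) = walk_of x \<omega> (n * L) + int L"
        using walk_of_add[of x \<omega> "n * L" L] walk_allT[OF allt] by simp
      moreover have "lo < walk_of x \<omega> (n * L)" using w1 unfolding Fz_def by auto
      moreover have "walk_of x \<omega> (n * L + L) < hi" using w unfolding Fz_def by auto
      ultimately show False using L by linarith
    qed
    then show "\<omega> \<in> {\<omega>. stake (n * L) \<omega> \<in> X \<and> sdrop (n * L) \<omega> \<in> C}" using w1 FX by auto
  qed
  have ms: "{\<omega>. stake (n * L) \<omega> \<in> X \<and> sdrop (n * L) \<omega> \<in> C} \<in> sets (step_space p)"
  proof -
    have "{\<omega>. stake (n * L) \<omega> \<in> X \<and> sdrop (n * L) \<omega> \<in> C} = {\<omega>. stake (n * L) \<omega> \<in> X} \<inter> {\<omega>. sdrop (n * L) \<omega> \<in> C}" by auto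
    then show ?thesis using sets.Int[OF stake_sets sdrop_sets[OF Cs]] by simp
  qed
  have "measure (step_space p) (Fz x lo hi (n * L + L)) \<le> measure (step_space p) {\<omega>. stake (n * L) \<omega> \<in> X \<and> sdrop (n * L) \<omega> \<in> C}"
    by (rule S.finite_measure_mono[OF sub ms])
  also have "\<dots> = measure (step_space p) (Fz x lo hi (n * L)) * measure (step_space p) C"
    unfolding FX by (rule prefix_indep[OF p Cs])
  also have "measure (step_space p) C = 1 - p ^ L"
    unfolding C_def S.prob_compl[OF allT_sets] allT_prob[OF p] ..
  finally show ?thesis .
qed

lemma Z_zero:
  assumes p: "0 < p" "p \<le> 1" and lohi: "lo < hi"
  shows "measure (step_space p) {\<omega>. \<forall>i. lo < walk_of x \<omega> i \<and> walk_of x \<omega> i < hi} = 0"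
proof -
  interpret S: prob_space "step_space p" by (rule prob_space_step)
  define L where "L = nat (hi - lo)"
  have L: "lo + int L \<ge> hi" unfolding L_def by simp
  have pL: "0 < p ^ L" "p ^ L \<le> 1" using p by (auto intro: power_le_one)
  have bound: "measure (step_space p) (Fz x lo hi (n * L)) \<le> (1 - p ^ L) ^ n" for n
  proof (induction n)
    case 0
    show ?case by simp
  next
    case (Suc n)
    have "measure (step_space p) (Fz x lo hi (Suc n * L)) \<le> measure (step_space p) (Fz x lo hi (n * L)) * (1 - p ^ L)"
      using Fz_step[OF _ _ L, of p x n] p by (simp add: add.commute)
    also have "\<dots> \<le> (1 - p ^ L) ^ n * (1 - p ^ L)"
      using Suc.IH pL by (intro mult_right_mono) auto
    finally show ?case by (simp add: mult.commute)
  qed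
  let ?Z = "{\<omega>. \<forall>i. lo < walk_of x \<omega> i \<and> walk_of x \<omega> i < hi}"
  have le: "measure (step_space p) ?Z \<le> (1 - p ^ L) ^ n" for n
  proof -
    have "?Z \<subseteq> Fz x lo hi (n * L)" unfolding Fz_def by auto
    then have "measure (step_space p) ?Z \<le> measure (step_space p) (Fz x lo hi (n * L))"
      by (rule S.finite_measure_mono) (rule Fz_sets)
    then show ?thesis using bound[of n] by linarith
  qed
  have "(\<lambda>n. (1 - p ^ L) ^ n) \<longlonglongrightarrow> 0"
    by (rule LIMSEQ_power_zero) (use pL in auto)
  then have "measure (step_space p) ?Z \<le> 0"
    by (rule LIMSEQ_le_const) (use le in auto)
  then show ?thesis using measure_nonneg[of "step_space p" ?Z] by linarith
qed


lemma geo_amgm: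
  fixes r :: real
  assumes r: "0 < r"
  shows "(real m + 1) * sqrt (r ^ m) \<le> (\<Sum>i\<le>m. r ^ i)"
proof -
  have rev: "(\<Sum>i\<le>m. r ^ i) = (\<Sum>i\<le>m. r ^ (m - i))"
    using sum.atLeastAtMost_rev[of "\<lambda>i. r ^ i" 0 m] by (simp add: atLeast0AtMost)
  have t: "2 * sqrt (r ^ m) \<le> r ^ i + r ^ (m - i)" if "i \<le> m" for i
  proof -
    have "r ^ i * r ^ (m - i) = r ^ m" using that by (simp flip: power_add)
    then have "sqrt (r ^ i * r ^ (m - i)) = sqrt (r ^ m)" by simp
    moreover have "sqrt (r ^ i * r ^ (m - i)) \<le> (r ^ i + r ^ (m - i)) / 2"
      by (rule arith_geo_mean_sqrt) (use r in auto)
    ultimately show ?thesis by simp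
  qed
  have "2 * ((real m + 1) * sqrt (r ^ m)) = (\<Sum>i\<le>m. 2 * sqrt (r ^ m))" by simp
  also have "\<dots> \<le> (\<Sum>i\<le>m. r ^ i + r ^ (m - i))" by (rule sum_mono) (use t in auto)
  also have "\<dots> = 2 * (\<Sum>i\<le>m. r ^ i)" using rev by (simp add: sum.distrib)
  finally show ?thesis by simp
qed

lemma cancel_aux:
  fixes c d a S :: real
  assumes "c \<noteq> 0" "d \<noteq> 0"
  shows "(c * (a * d)) / (c * (d * S)) = a / S"
proof -
  have "(c * (a * d)) / (c * (d * S)) = (a * d) / (d * S)" using assms(1) by (rule mult_divide_mult_cancel_left)
  also have "\<dots> = (d * a) / (d * S)" by (simp add: mult.commute)
  also have "\<dots> = a / S" using assms(2) by (rule mult_divide_mult_cancel_left)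
  finally show ?thesis .
qed

lemma vg_bound:
  fixes r :: real
  assumes r: "0 < r" "r < 1" and J: "1 \<le> J" "J < k"
  shows "(r - 1) / (r ^ k - 1) * ((r ^ k - r ^ (k + 1)) / (r ^ J - r ^ (k + 1))) \<le> 1 / (real (k - J) + 1) ^ 2"
proof -
  define m where "m = k - J"
  define S where "S = (\<Sum>i\<le>m. r ^ i)"
  have "r ^ 0 \<le> S" unfolding S_def by (rule member_le_sum) (use r in auto)
  then have S1: "1 \<le> S" by simp
  have geo: "1 - r ^ (m + 1) = (1 - r) * S"
    unfolding S_def using one_diff_power_eq[of r "m + 1"] by (simp add: lessThan_Suc_atMost)
  have k: "k = J + m" unfolding m_def using J by simp
  have g: "(r ^ k - r ^ (k + 1)) / (r ^ J - r ^ (k + 1)) = r ^ m / S"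
  proof -
    have "r ^ k - r ^ (k + 1) = r ^ J * (r ^ m * (1 - r))" unfolding k by (simp add: power_add algebra_simps)
    moreover have "r ^ J - r ^ (k + 1) = r ^ J * ((1 - r) * S)" unfolding k geo[symmetric]
      by (simp add: power_add algebra_simps)
    ultimately have "(r ^ k - r ^ (k + 1)) / (r ^ J - r ^ (k + 1)) = (r ^ J * (r ^ m * (1 - r))) / (r ^ J * ((1 - r) * S))"
      by (simp only:)
    also have "\<dots> = r ^ m / S" by (rule cancel_aux) (use r in auto)
    finally show ?thesis .
  qed
  have v: "(r - 1) / (r ^ k - 1) \<le> 1 / S"
  proof -
    have "r ^ k \<le> r ^ (m + 1)" using r J unfolding k by (intro power_decreasing) auto
    then have "(1 - r) * S \<le> 1 - r ^ k" using geo by linarith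
    moreover have "0 < (1 - r) * S" using r S1 by simp
    ultimately have "(1 - r) / (1 - r ^ k) \<le> (1 - r) / ((1 - r) * S)"
      by (intro divide_left_mono) (use r in auto)
    also have "\<dots> = 1 / S" using r by simp
    finally have "(1 - r) / (1 - r ^ k) \<le> 1 / S" .
    moreover have "(r - 1) / (r ^ k - 1) = (1 - r) / (1 - r ^ k)"
    proof -
      have "(r - 1) / (r ^ k - 1) = (- (1 - r)) / (- (1 - r ^ k))" by simp
      also have "\<dots> = (1 - r) / (1 - r ^ k)" by (rule minus_divide_divide)
      finally show ?thesis .
    qed
    ultimately show ?thesis by simp
  qed
  have am: "(real m + 1) * sqrt (r ^ m) \<le> S" unfolding S_def by (rule geo_amgm[OF r(1)])
  have am2: "(real m + 1) ^ 2 * r ^ m \<le> S ^ 2"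
  proof -
    have "((real m + 1) * sqrt (r ^ m)) ^ 2 \<le> S ^ 2"
      using am by (intro power_mono) (use r in auto)
    then show ?thesis using r by (simp add: power_mult_distrib)
  qed
  have "(r - 1) / (r ^ k - 1) * ((r ^ k - r ^ (k + 1)) / (r ^ J - r ^ (k + 1))) \<le> 1 / S * (r ^ m / S)"
    unfolding g using v r S1 by (intro mult_right_mono) auto
  also have "\<dots> = r ^ m / S ^ 2" by (simp add: power2_eq_square)
  also have "\<dots> \<le> r ^ m / ((real m + 1) ^ 2 * r ^ m)"
    by (rule divide_left_mono[OF am2]) (use r S1 in auto)
  also have "\<dots> = 1 / (real m + 1) ^ 2" using r by simp
  finally show ?thesis unfolding m_def .
qed


definition C1 :: "nat \<Rightarrow> nat \<Rightarrow> bool stream set" where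
  "C1 k j = {\<omega>. \<exists>b. FHB (int k) (int j) {int k + 1} b \<omega> \<and> sdrop b \<omega> \<in> H (int j)}"

definition Ek :: "nat \<Rightarrow> nat \<Rightarrow> bool stream set" where
  "Ek k j = {\<omega>. \<exists>a. FHB 1 (int k) {0} a \<omega> \<and> sdrop a \<omega> \<in> C1 k j}"

lemma C1_sets: "C1 k j \<in> sets (step_space p)"
  unfolding C1_def by (rule FHB_sm_sets[OF H_sets])

lemma Ek_sets: "Ek k j \<in> sets (step_space p)"
  unfolding Ek_def by (rule FHB_sm_sets[OF C1_sets])

lemma Ek_bound:
  assumes p: "1/2 < p" "p < 1" and j: "1 \<le> j" "j < k"
  shows "measure (step_space p) (Ek k j) \<le> real j / (real (k - j) + 1) ^ 2 * measure (step_space p) (H 1)"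
proof -
  interpret S: prob_space "step_space p" by (rule prob_space_step)
  have p01: "0 \<le> p" "p \<le> 1" using p by auto
  define r where "r = (1 - p) / p"
  have r: "0 < r" "r < 1" using p unfolding r_def by (auto simp: field_simps)
  define v where "v = measure (step_space p) {\<omega>. \<exists>a. FHB 1 (int k) {0} a \<omega>}"
  define g where "g = measure (step_space p) {\<omega>. \<exists>b. FHB (int k) (int j) {int k + 1} b \<omega>}"
  have v: "v \<le> (r - 1) / (r ^ k - 1)"
  proof -
    have "v = measure (step_space p) (Gall 1 (int k) 0)" unfolding v_def FHB_Gall ..
    also have "\<dots> \<le> (r powi 1 - r powi 0) / (r powi (int k) - r powi 0)"
      unfolding r_def by (rule gambler[OF p]) (use j in auto)
    also have "\<dots> = (r - 1) / (r ^ k - 1)" by simp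
    finally show ?thesis .
  qed
  have g: "g \<le> (r ^ k - r ^ (k + 1)) / (r ^ j - r ^ (k + 1))"
  proof -
    have "g = measure (step_space p) (Gall (int k) (int j) (int k + 1))" unfolding g_def FHB_Gall ..
    also have "\<dots> \<le> (r powi (int k) - r powi (int k + 1)) / (r powi (int j) - r powi (int k + 1))"
      unfolding r_def by (rule gambler[OF p]) (use j in auto)
    also have "\<dots> = (r ^ k - r ^ (k + 1)) / (r ^ j - r ^ (k + 1))"
    proof -
      have e: "int k + 1 = int (k + 1)" by simp
      show ?thesis unfolding e power_int_of_nat ..
    qed
    finally show ?thesis .
  qed
  have h: "measure (step_space p) (H (int j)) \<le> real j * measure (step_space p) (H 1)"
    by (rule H_le[OF p01])
  have "measure (step_space p) (Ek k j) = v * measure (step_space p) (C1 k j)"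
    unfolding Ek_def v_def by (rule FHB_sm[OF p01 C1_sets])
  also have "measure (step_space p) (C1 k j) = g * measure (step_space p) (H (int j))"
    unfolding C1_def g_def by (rule FHB_sm[OF p01 H_sets])
  also have "v * (g * measure (step_space p) (H (int j))) \<le> v * (g * (real j * measure (step_space p) (H 1)))"
    using h by (intro mult_left_mono) (auto simp: v_def g_def)
  also have "\<dots> = (v * g) * real j * measure (step_space p) (H 1)" by simp
  also have "\<dots> \<le> ((r - 1) / (r ^ k - 1) * ((r ^ k - r ^ (k + 1)) / (r ^ j - r ^ (k + 1)))) * real j * measure (step_space p) (H 1)"
  proof -
    have "v * g \<le> (r - 1) / (r ^ k - 1) * ((r ^ k - r ^ (k + 1)) / (r ^ j - r ^ (k + 1)))"
    proof -
      have v0: "0 \<le> v" and g0: "0 \<le> g" by (simp_all add: v_def g_def)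
      show ?thesis by (rule mult_mono[OF v g order_trans[OF v0 v] g0])
    qed
    then show ?thesis by (intro mult_right_mono) auto
  qed
  also have "\<dots> \<le> (1 / (real (k - j) + 1) ^ 2) * real j * measure (step_space p) (H 1)"
    using vg_bound[OF r j] by (intro mult_right_mono) auto
  finally show ?thesis by simp
qed


lemma tau_le: "w n = c \<Longrightarrow> tau c w \<le> enat n"
  unfolding tau_def by (auto intro: Least_le)

lemma tau_le_inv:
  assumes "tau c w \<le> enat n"
  shows "\<exists>a\<le>n. w a = c \<and> (\<forall>i<a. w i \<noteq> c) \<and> tau c w = enat a"
proof -
  have ex: "\<exists>m. w m = c" using assms unfolding tau_def by (auto split: if_splits)
  define a where "a = (LEAST m. w m = c)"
  have t: "tau c w = enat a" unfolding tau_def a_def using ex by simp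
  have "w a = c" unfolding a_def using ex by (auto intro: LeastI_ex)
  moreover have "\<forall>i<a. w i \<noteq> c" unfolding a_def using not_less_Least by blast
  moreover have "a \<le> n" using assms t by simp
  ultimately show ?thesis using t by blast
qed

lemma tau_gt_inv:
  assumes "enat n < tau c w" shows "\<forall>i\<le>n. w i \<noteq> c"
proof (intro allI impI)
  fix i assume "i \<le> n"
  show "w i \<noteq> c"
  proof
    assume "w i = c"
    then have "tau c w \<le> enat i" by (rule tau_le)
    moreover have "enat i \<le> enat n" using \<open>i \<le> n\<close> by simp
    ultimately have "tau c w \<le> enat n" by (rule order_trans)
    then show False using assms by simp
  qed
qed

lemma tau_gt:
  assumes "\<forall>i\<le>n. w i \<noteq> c" shows "enat n < tau c w"
proof (cases "\<exists>m. w m = c")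
  case True
  then have t: "tau c w = enat (LEAST m. w m = c)" unfolding tau_def by simp
  have "w (LEAST m. w m = c) = c" using True by (auto intro: LeastI_ex)
  then have "n < (LEAST m. w m = c)" using assms by (meson not_le)
  then show ?thesis using t by simp
next
  case False
  then show ?thesis unfolding tau_def by simp
qed

lemma tau_plus_inf: "tau_plus 0 w = \<infinity> \<Longrightarrow> 1 \<le> n \<Longrightarrow> w n \<noteq> 0"
  unfolding tau_plus_def by (auto split: if_splits)

definition Jf :: "nat \<Rightarrow> real \<Rightarrow> nat \<Rightarrow> nat" where
  "Jf N \<epsilon> k = nat (\<lceil>real k / real N powr \<epsilon>\<rceil> - 1)"

lemma Jf_le: "real (Jf N \<epsilon> k) \<le> real k / real N powr \<epsilon>"
proof -
  define x where "x = real k / real N powr \<epsilon>"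
  have x0: "0 \<le> x" unfolding x_def by simp
  have le: "real_of_int (\<lceil>x\<rceil> - 1) \<le> x" by linarith
  show ?thesis
  proof (cases "\<lceil>x\<rceil> - 1 \<ge> 0")
    case True
    then have "real (Jf N \<epsilon> k) = real_of_int (\<lceil>x\<rceil> - 1)" unfolding Jf_def x_def[symmetric] by simp
    then show ?thesis using le unfolding x_def by simp
  next
    case False
    then have "Jf N \<epsilon> k = 0" unfolding Jf_def x_def[symmetric] by simp
    then show ?thesis using x0 unfolding x_def by simp
  qed
qed

lemma path_main:
  fixes \<omega> :: "bool stream" and N :: nat and \<epsilon> :: real
  defines "w \<equiv> walk_of 1 \<omega>"
  assumes N2: "2 \<le> N" and eps: "0 < \<epsilon>"
    and A: "tau_plus 0 w = \<infinity>" and big: "\<bar>maxdev N w\<bar> > \<epsilon>"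
  shows "(\<forall>n. 0 < w n \<and> w n < int N) \<or>
         (\<exists>k\<in>{1..N}. 1 \<le> Jf N \<epsilon> k \<and> Jf N \<epsilon> k < k \<and> \<omega> \<in> Ek k (Jf N \<epsilon> k))"
proof -
  have w0: "w 0 = 1" unfolding w_def by simp
  have wd: "\<And>i. \<bar>w (Suc i) - w i\<bar> \<le> 1" unfolding w_def by (rule walk_diff)
  have nz: "w n \<noteq> 0" for n
  proof (cases "n = 0")
    case True then show ?thesis using w0 by simp
  next
    case False then show ?thesis using tau_plus_inf[OF A, of n] by simp
  qed
  have pos: "1 \<le> w n" for n
  proof (rule ccontr)
    assume "\<not> 1 \<le> w n"
    then have "w n \<le> 0" by simp
    then obtain i where "w i = 0" using ivt_down[of w 0 n, OF wd] w0 by auto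
    then show False using nz by simp
  qed
  show ?thesis
  proof (cases "\<forall>n. w n \<noteq> int N")
    case True
    have "w n < int N" for n
    proof (rule ccontr)
      assume "\<not> w n < int N"
      then obtain i where "w i = int N" using ivt_up[of w "int N" n, OF wd] w0 N2 by auto
      then show False using True by simp
    qed
    moreover have "0 < w n" for n using pos[of n] by simp
    ultimately show ?thesis by blast
  next
    case False
    then obtain n0 where n0: "w n0 = int N" by auto
    define I where "I k = {n. tau (int k) w \<le> enat n \<and> enat n < tau (int k + 1) w}" for k
    define val where "val k n = log (real N) (real k) - log (real N) (real_of_int (w n))" for k n
    have md: "maxdev N w = (SUP k\<in>{1..N}. SUP n\<in>I k. val k n)"
      unfolding maxdev_def I_def val_def ..
    have reach: "\<exists>a. tau (int k) w = enat a \<and> w a = int k \<and> (\<forall>i<a. w i \<noteq> int k) \<and> a \<in> I k"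
      if k: "k \<in> {1..N}" for k
    proof -
      obtain i where "w i = int k" using ivt_up[of w "int k" n0, OF wd] w0 n0 k by auto
      then have "tau (int k) w \<le> enat i" by (rule tau_le)
      then obtain a where a: "w a = int k" "\<forall>i<a. w i \<noteq> int k" "tau (int k) w = enat a"
        using tau_le_inv by blast
      have "\<forall>i\<le>a. w i \<noteq> int k + 1"
      proof (intro allI impI)
        fix i assume ia: "i \<le> a"
        show "w i \<noteq> int k + 1"
        proof
          assume wi: "w i = int k + 1"
          obtain i' where i': "i' \<le> i" "w i' = int k" using ivt_up[of w "int k" i, OF wd] w0 k wi by auto
          show False
          proof (cases "i' < a")
            case True then show False using a(2) i' by auto
          next
            case False then have "i' = a" "i = a" using i' ia by auto
            then show False using wi a(1) by simp
          qed
        qed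
      qed
      then have "enat a < tau (int k + 1) w" by (rule tau_gt)
      then have "a \<in> I k" unfolding I_def using a(3) by simp
      then show ?thesis using a by blast
    qed
    have Ine: "I k \<noteq> {}" if "k \<in> {1..N}" for k using reach[OF that] by blast
    have inner1: "(SUP n\<in>I 1. val 1 n) = 0"
    proof -
      have "val 1 n = 0" if "n \<in> I 1" for n
      proof -
        have "enat n < tau 2 w" using that unfolding I_def by simp
        then have no2: "\<forall>i\<le>n. w i \<noteq> 2" by (rule tau_gt_inv)
        have "w n \<le> 1"
        proof (rule ccontr)
          assume "\<not> w n \<le> 1"
          then obtain i where "i \<le> n" "w i = 2" using ivt_up[of w 2 n, OF wd] w0 by auto
          then show False using no2 by auto
        qed
        then have "w n = 1" using pos[of n] by simp
        then show ?thesis unfolding val_def by simp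
      qed
      then have "(SUP n\<in>I 1. val 1 n) = (SUP n\<in>I 1. 0::real)" by (intro SUP_cong) auto
      also have "\<dots> = 0" using Ine[of 1] N2 by simp
      finally show ?thesis .
    qed
    have "0 \<le> maxdev N w"
    proof -
      have "(SUP n\<in>I 1. val 1 n) \<le> (SUP k\<in>{1..N}. SUP n\<in>I k. val k n)"
      proof (rule cSUP_upper[where f="\<lambda>k. SUP n\<in>I k. val k n"])
        show "1 \<in> {1..N}" using N2 by simp
        show "bdd_above ((\<lambda>k. SUP n\<in>I k. val k n) ` {1..N})" by (rule bdd_above_finite) simp
      qed
      then show ?thesis using inner1 md by simp
    qed
    then have gt: "\<epsilon> < (SUP k\<in>{1..N}. SUP n\<in>I k. val k n)" using big md by linarith
    have "\<exists>k\<in>{1..N}. \<epsilon> < (SUP n\<in>I k. val k n)"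
    proof (rule ccontr)
      assume "\<not> (\<exists>k\<in>{1..N}. \<epsilon> < (SUP n\<in>I k. val k n))"
      then have hk: "\<forall>k\<in>{1..N}. (SUP n\<in>I k. val k n) \<le> \<epsilon>" by (simp add: not_less)
      have "(SUP k\<in>{1..N}. SUP n\<in>I k. val k n) \<le> \<epsilon>"
      proof (rule cSUP_least[where f="\<lambda>k. SUP n\<in>I k. val k n"])
        show "{1..N} \<noteq> {}" using N2 by simp
        fix k assume "k \<in> {1..N}" then show "(SUP n\<in>I k. val k n) \<le> \<epsilon>" using hk by blast
      qed
      then show False using gt by simp
    qed
    then obtain k where k: "k \<in> {1..N}" "\<epsilon> < (SUP n\<in>I k. val k n)" by blast
    have "\<exists>n\<in>I k. \<epsilon> < val k n"
    proof (rule ccontr)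
      assume "\<not> (\<exists>n\<in>I k. \<epsilon> < val k n)"
      then have hn: "\<forall>n\<in>I k. val k n \<le> \<epsilon>" by (simp add: not_less)
      have "(SUP n\<in>I k. val k n) \<le> \<epsilon>"
      proof (rule cSUP_least)
        show "I k \<noteq> {}" by (rule Ine[OF k(1)])
        fix n assume "n \<in> I k" then show "val k n \<le> \<epsilon>" using hn by blast
      qed
      then show False using k(2) by simp
    qed
    then obtain n where n: "n \<in> I k" "\<epsilon> < val k n" by blast
    define c where "c = w n"
    have c1: "1 \<le> c" unfolding c_def by (rule pos)
    have N1: "1 < real N" using N2 by simp
    have kpos: "0 < real k" using k by simp
    have "\<epsilon> < log (real N) (real k / real_of_int c)"
      using n(2) c1 kpos unfolding val_def c_def by (simp add: log_divide)
    then have "real N powr \<epsilon> < real k / real_of_int c"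
      using less_log_iff[OF N1, of "real k / real_of_int c" \<epsilon>] c1 kpos by simp
    then have cx: "real_of_int c < real k / real N powr \<epsilon>"
      using c1 N1 by (simp add: field_simps)
    define j where "j = Jf N \<epsilon> k"
    have cj: "c \<le> int j"
    proof -
      have "real_of_int c < real_of_int \<lceil>real k / real N powr \<epsilon>\<rceil>"
        using cx le_of_int_ceiling[of "real k / real N powr \<epsilon>"] by linarith
      then have "c < \<lceil>real k / real N powr \<epsilon>\<rceil>" by (simp only: of_int_less_iff)
      then have z0: "0 \<le> \<lceil>real k / real N powr \<epsilon>\<rceil> - 1" using c1 by linarith
      have "int j = \<lceil>real k / real N powr \<epsilon>\<rceil> - 1" unfolding j_def Jf_def by (rule nat_0_le[OF z0])
      then show ?thesis using \<open>c < \<lceil>real k / real N powr \<epsilon>\<rceil>\<close> by linarith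
    qed
    have j1: "1 \<le> j" using cj c1 by simp
    have jk: "j < k"
    proof -
      have "real j \<le> real k / real N powr \<epsilon>" unfolding j_def by (rule Jf_le)
      moreover have "real k / real N powr \<epsilon> < real k"
      proof -
        have "1 < real N powr \<epsilon>" using N1 eps by simp
        then show ?thesis using kpos by (simp add: divide_less_eq)
      qed
      ultimately show ?thesis by simp
    qed
    obtain a where a: "tau (int k) w = enat a" "w a = int k" "\<forall>i<a. w i \<noteq> int k"
      using reach[OF k(1)] by blast
    have na: "a \<le> n" using n(1) a(1) unfolding I_def by simp
    have "enat n < tau (int k + 1) w" using n(1) unfolding I_def by simp
    then have nk1: "\<forall>i\<le>n. w i \<noteq> int k + 1" by (rule tau_gt_inv)
    define \<omega>' where "\<omega>' = sdrop a \<omega>"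
    define f where "f i = walk_of (int k) \<omega>' i" for i
    have f: "f i = w (a + i)" for i
      unfolding f_def \<omega>'_def w_def using walk_of_add[of 1 \<omega> a i] a(2) unfolding w_def by simp
    have fd: "\<And>i. \<bar>f (Suc i) - f i\<bar> \<le> 1" unfolding f_def by (rule walk_diff)
    have f0: "f 0 = int k" using f[of 0] a(2) by simp
    have fn: "f (n - a) = c" using f[of "n - a"] na unfolding c_def by simp
    have "int j \<le> f 0" using f0 jk by simp
    moreover have "f (n - a) \<le> int j" using fn cj by simp
    ultimately obtain i0 where i0: "i0 \<le> n - a" "f i0 = int j"
      using ivt_down[of f "int j" "n - a", OF fd] by blast
    obtain b where b: "b \<le> i0" "f b = int j" "\<forall>i<b. f i \<noteq> int j"
      using first_hit[of f i0 "int j"] i0(2) by auto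
    have fb: "FHB (int k) (int j) {int k + 1} b \<omega>'"
      unfolding FHB_def f_def[symmetric]
    proof (intro conjI allI impI)
      show "f b = int j" by (rule b(2))
      show "\<And>i. i < b \<Longrightarrow> f i \<noteq> int j" using b(3) by simp
      fix i assume "i \<le> b"
      then show "f i \<notin> {int k + 1}" using nk1 f[of i] b(1) i0(1) na by auto
    qed
    have hb: "sdrop b \<omega>' \<in> H (int j)"
      unfolding H_def
    proof (intro CollectI allI)
      fix i
      have "walk_of (int j) (sdrop b \<omega>') i = f (b + i)"
        unfolding f_def using walk_of_add[of "int k" \<omega>' b i] b(2) unfolding f_def by simp
      then show "walk_of (int j) (sdrop b \<omega>') i \<noteq> 0" using f nz by simp
    qed
    have "\<omega>' \<in> C1 k j" unfolding C1_def using fb hb by blast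
    moreover have "FHB 1 (int k) {0} a \<omega>"
      unfolding FHB_def using a(2,3) nz unfolding w_def by auto
    ultimately have "\<omega> \<in> Ek k j" unfolding Ek_def \<omega>'_def by blast
    then show ?thesis using k(1) j1 jk unfolding j_def by blast
  qed
qed


lemma walk_coord_meas: "(\<lambda>\<omega>. walk_of x \<omega> n) \<in> measurable (step_space p) (count_space UNIV)"
proof -
  have st: "stake n \<in> measurable (step_space p) (count_space (UNIV :: bool list set))"
    using measurable_stake[of n] by (subst measurable_cong_sets[OF sets_step_space refl])
  have e: "(\<lambda>\<omega>. walk_of x \<omega> n) = (\<lambda>xs. x + (\<Sum>i<n. if xs ! i then 1 else -1)) \<circ> stake n"
  proof
    fix \<omega> :: "bool stream"
    show "walk_of x \<omega> n = ((\<lambda>xs. x + (\<Sum>i<n. if xs ! i then 1 else -1)) \<circ> stake n) \<omega>"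
      unfolding walk_of_def o_def by (intro arg_cong[where f="(+) x"] sum.cong) (auto simp: stake_nth)
  qed
  show ?thesis unfolding e by (rule measurable_comp[OF st]) simp
qed

lemma walk_meas: "walk_of x \<in> measurable (step_space p) (PiM UNIV (\<lambda>_. count_space UNIV))"
proof -
  have "(\<lambda>\<omega> i. walk_of x \<omega> i) \<in> measurable (step_space p) (PiM UNIV (\<lambda>_. count_space UNIV))"
    by (rule measurable_PiM_single') (auto intro: walk_coord_meas)
  then show ?thesis by simp
qed

lemma A_sets: "{w :: nat \<Rightarrow> int. tau_plus 0 w = \<infinity>} \<in> sets (PiM UNIV (\<lambda>_. count_space UNIV))"
proof -
  have e: "{w :: nat \<Rightarrow> int. tau_plus 0 w = \<infinity>} = {w \<in> space (PiM UNIV (\<lambda>_. count_space UNIV)). \<forall>n. 1 \<le> n \<longrightarrow> w n \<noteq> 0}"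
    unfolding tau_plus_def by (auto simp: space_PiM split: if_splits)
  have "Measurable.pred (PiM UNIV (\<lambda>_. count_space UNIV)) (\<lambda>w::nat \<Rightarrow> int. \<forall>n. 1 \<le> n \<longrightarrow> w n \<noteq> 0)"
    by measurable
  then show ?thesis unfolding e Measurable.pred_def .
qed


lemma k_arith:
  fixes k j :: nat and y :: real
  assumes j: "j < k" "real j \<le> real k / y" and y: "2 \<le> y"
  shows "real j / (real (k - j) + 1) ^ 2 \<le> 4 / (real k * y)"
proof -
  have kp: "0 < real k" using j by simp
  have yk: "real k / y \<le> real k / 2" using y kp by (intro divide_left_mono) auto
  have kj: "real (k - j) = real k - real j" using j by simp
  have big: "real k / 2 \<le> real (k - j) + 1" using kj j yk by linarith
  have sq: "(real k / 2) ^ 2 \<le> (real (k - j) + 1) ^ 2" using big kp by (intro power_mono) auto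
  have "real j / (real (k - j) + 1) ^ 2 \<le> (real k / y) / (real (k - j) + 1) ^ 2"
    using j(2) by (intro divide_right_mono) auto
  also have "\<dots> \<le> (real k / y) / (real k / 2) ^ 2"
    using sq kp y by (intro divide_left_mono) auto
  also have "\<dots> = 4 / (real k * y)" using kp y by (simp add: field_simps power2_eq_square)
  finally show ?thesis .
qed

lemma harm_bound: "1 \<le> N \<Longrightarrow> (\<Sum>k=1..N. 1 / real k) \<le> 1 + ln (real N)"
proof -
  assume N: "1 \<le> N"
  then obtain m where m: "N = Suc m" by (cases N) auto
  have "harm (Suc m) - ln (real (Suc m)) \<le> harm (Suc 0) - ln (real (Suc 0))"
    using decseqD[OF decseq_harm_diff_ln, of 0 m] by simp
  then have "harm N \<le> (1::real) + ln (real N)" using m by (simp add: harm_def)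
  then show ?thesis by (simp add: harm_def inverse_eq_divide)
qed

lemma ratio_bound:
  assumes p: "1/2 < p" "p < 1" and N2: "2 \<le> N" and eps: "0 < \<epsilon>" and Ne: "2 \<le> real N powr \<epsilon>"
  shows "walk_law_plus_prob p 1 {w. \<bar>maxdev N w\<bar> > \<epsilon>} \<le> 4 * (1 + ln (real N)) / real N powr \<epsilon>"
proof -
  interpret S: prob_space "step_space p" by (rule prob_space_step)
  have p01: "0 \<le> p" "p \<le> 1" using p by auto
  define A where "A = {w :: nat \<Rightarrow> int. tau_plus 0 w = \<infinity>}"
  define E where "E = {w. \<bar>maxdev N w\<bar> > \<epsilon>}"
  define D where "D = measure (step_space p) (H 1)"
  define K where "K = {k \<in> {1..N}. 1 \<le> Jf N \<epsilon> k \<and> Jf N \<epsilon> k < k}"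
  define Z where "Z = {\<omega>. \<forall>n. 0 < walk_of 1 \<omega> n \<and> walk_of 1 \<omega> n < int N}"
  define B where "B = 4 * (1 + ln (real N)) / real N powr \<epsilon>"
  have D0: "0 \<le> D" unfolding D_def by simp
  have den: "measure (walk_law p 1) A = D"
  proof -
    have "measure (walk_law p 1) A = measure (step_space p) (walk_of 1 -` A \<inter> space (step_space p))"
      unfolding walk_law_def A_def by (rule measure_distr[OF walk_meas A_sets])
    also have "walk_of 1 -` A \<inter> space (step_space p) = H 1"
    proof (intro set_eqI iffI)
      fix \<omega> assume "\<omega> \<in> walk_of 1 -` A \<inter> space (step_space p)"
      then have "tau_plus 0 (walk_of 1 \<omega>) = \<infinity>" unfolding A_def by simp
      then have "walk_of 1 \<omega> n \<noteq> 0" for n using tau_plus_inf[of "walk_of 1 \<omega>" n] by (cases n) auto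
      then show "\<omega> \<in> H 1" unfolding H_def by simp
    next
      fix \<omega> assume "\<omega> \<in> H 1"
      then have "\<not> (\<exists>n\<ge>1. walk_of 1 \<omega> n = 0)" unfolding H_def by simp
      then show "\<omega> \<in> walk_of 1 -` A \<inter> space (step_space p)" unfolding A_def tau_plus_def by simp
    qed
    finally show ?thesis unfolding D_def .
  qed
  have Zs: "Z \<in> sets (step_space p)"
  proof -
    have "Z = (\<Inter>n. Fz 1 0 (int N) n)" unfolding Z_def Fz_def by auto
    then show ?thesis using sets.countable_INT[where X=UNIV and A="\<lambda>n. Fz 1 0 (int N) n"] Fz_sets by auto
  qed
  have Z0: "measure (step_space p) Z = 0" unfolding Z_def by (rule Z_zero) (use p N2 in auto)
  have Ubs: "(\<Union>k\<in>K. Ek k (Jf N \<epsilon> k)) \<in> sets (step_space p)"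
    by (rule sets.finite_UN) (auto simp: K_def intro: Ek_sets)
  have num: "measure (walk_law p 1) (E \<inter> A) \<le> (\<Sum>k\<in>K. measure (step_space p) (Ek k (Jf N \<epsilon> k)))"
  proof (cases "E \<inter> A \<in> sets (PiM UNIV (\<lambda>_. count_space UNIV))")
    case True
    have "measure (walk_law p 1) (E \<inter> A) = measure (step_space p) (walk_of 1 -` (E \<inter> A) \<inter> space (step_space p))"
      unfolding walk_law_def by (rule measure_distr[OF walk_meas True])
    also have "\<dots> \<le> measure (step_space p) (Z \<union> (\<Union>k\<in>K. Ek k (Jf N \<epsilon> k)))"
    proof (rule S.finite_measure_mono)
      show "walk_of 1 -` (E \<inter> A) \<inter> space (step_space p) \<subseteq> Z \<union> (\<Union>k\<in>K. Ek k (Jf N \<epsilon> k))"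
      proof
        fix \<omega> assume "\<omega> \<in> walk_of 1 -` (E \<inter> A) \<inter> space (step_space p)"
        then have a: "tau_plus 0 (walk_of 1 \<omega>) = \<infinity>" and e: "\<bar>maxdev N (walk_of 1 \<omega>)\<bar> > \<epsilon>"
          unfolding A_def E_def by auto
        from path_main[OF N2 eps a e] show "\<omega> \<in> Z \<union> (\<Union>k\<in>K. Ek k (Jf N \<epsilon> k))"
          unfolding Z_def K_def by blast
      qed
      show "Z \<union> (\<Union>k\<in>K. Ek k (Jf N \<epsilon> k)) \<in> sets (step_space p)" by (rule sets.Un[OF Zs Ubs])
    qed
    also have "\<dots> \<le> measure (step_space p) Z + measure (step_space p) (\<Union>k\<in>K. Ek k (Jf N \<epsilon> k))"
      by (rule measure_subadditive[OF Zs Ubs]) (simp_all add: S.emeasure_eq_measure)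
    also have "measure (step_space p) (\<Union>k\<in>K. Ek k (Jf N \<epsilon> k)) \<le> (\<Sum>k\<in>K. measure (step_space p) (Ek k (Jf N \<epsilon> k)))"
      by (rule S.finite_measure_subadditive_finite) (auto simp: K_def intro: Ek_sets)
    finally show ?thesis using Z0 by simp
  next
    case False
    then have "measure (walk_law p 1) (E \<inter> A) = 0"
      by (intro measure_notin_sets) (simp add: walk_law_def)
    then show ?thesis by (simp add: sum_nonneg)
  qed
  also have "\<dots> \<le> (\<Sum>k\<in>K. 4 / (real k * real N powr \<epsilon>) * D)"
  proof (rule sum_mono)
    fix k assume k: "k \<in> K"
    then have j: "1 \<le> Jf N \<epsilon> k" "Jf N \<epsilon> k < k" unfolding K_def by auto
    have "measure (step_space p) (Ek k (Jf N \<epsilon> k)) \<le> real (Jf N \<epsilon> k) / (real (k - Jf N \<epsilon> k) + 1) ^ 2 * D"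
      unfolding D_def by (rule Ek_bound[OF p j])
    also have "\<dots> \<le> 4 / (real k * real N powr \<epsilon>) * D"
      by (intro mult_right_mono k_arith[OF j(2) Jf_le Ne] D0)
    finally show "measure (step_space p) (Ek k (Jf N \<epsilon> k)) \<le> 4 / (real k * real N powr \<epsilon>) * D" .
  qed
  also have "\<dots> \<le> (\<Sum>k\<in>{1..N}. 4 / (real k * real N powr \<epsilon>) * D)"
    by (rule sum_mono2) (use D0 in \<open>auto simp: K_def intro!: divide_nonneg_nonneg\<close>)
  also have "\<dots> = (\<Sum>k\<in>{1..N}. (4 / real N powr \<epsilon> * D) * (1 / real k))"
    by (intro sum.cong refl) simp
  also have "\<dots> = 4 / real N powr \<epsilon> * D * (\<Sum>k\<in>{1..N}. 1 / real k)"
    by (simp only: sum_distrib_left)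
  also have "\<dots> \<le> 4 / real N powr \<epsilon> * D * (1 + ln (real N))"
    using harm_bound[of N] N2 D0 by (intro mult_left_mono) auto
  also have "\<dots> = B * D" unfolding B_def by simp
  finally have numB: "measure (walk_law p 1) (E \<inter> A) \<le> B * D" .
  have B0: "0 \<le> B" unfolding B_def using N2 by simp
  have "walk_law_plus_prob p 1 E = measure (walk_law p 1) (E \<inter> A) / D"
    unfolding walk_law_plus_prob_def A_def[symmetric] den ..
  also have "\<dots> \<le> B"
  proof (cases "D = 0")
    case True then show ?thesis using B0 by simp
  next
    case False then have "0 < D" using D0 by simp
    then show ?thesis using numB by (simp add: divide_le_eq)
  qed
  finally show ?thesis unfolding E_def B_def .
qed


theorem corollaryA7:
  fixes p :: "nat \<Rightarrow> real"
  assumes "\<And>N. 1/2 < p N \<and> p N < 1"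
  shows "\<forall>\<epsilon>>0. (\<lambda>N. walk_law_plus_prob (p N) 1 {w. \<bar>maxdev N w\<bar> > \<epsilon>}) \<longlonglongrightarrow> 0"
proof (intro allI impI)
  fix \<epsilon> :: real assume eps: "\<epsilon> > 0"
  define B where "B N = 4 * (1 + ln (real N)) / real N powr \<epsilon>" for N :: nat
  have lim: "B \<longlonglongrightarrow> 0" unfolding B_def using eps by real_asymp
  have ev1: "eventually (\<lambda>N::nat. 2 \<le> N) sequentially" by (rule eventually_ge_at_top)
  have ev2: "eventually (\<lambda>N::nat. 2 \<le> real N powr \<epsilon>) sequentially" using eps by real_asymp
  have up: "eventually (\<lambda>N. walk_law_plus_prob (p N) 1 {w. \<bar>maxdev N w\<bar> > \<epsilon>} \<le> B N) sequentially"
    using ev1 ev2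
  proof eventually_elim
    case (elim N)
    show ?case unfolding B_def
      by (rule ratio_bound) (use assms[of N] elim eps in auto)
  qed
  have lo: "eventually (\<lambda>N. 0 \<le> walk_law_plus_prob (p N) 1 {w. \<bar>maxdev N w\<bar> > \<epsilon>}) sequentially"
    by (intro always_eventually allI) (simp add: walk_law_plus_prob_def)
  show "(\<lambda>N. walk_law_plus_prob (p N) 1 {w. \<bar>maxdev N w\<bar> > \<epsilon>}) \<longlonglongrightarrow> 0"
    by (rule tendsto_sandwich[OF lo up tendsto_const lim])
qed

end
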